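(* Let $L$ be a Leibniz algebra over $F$ and $(l,r,V)$ any representation of $L$. Then the restriction of $r$ to the ideal $\{\mathrm{Rad}(L),L\}$ is nilpotent, i.e. there exists an integer $m\ge1$ with $(r_{\{\mathrm{Rad}(L),L\}})^m=\{0\}$.
   Context: $F$ is an algebraically closed field of characteristic zero; all spaces are finite-dimensional. A (right) Leibniz algebra is a vector space $L$ with bilinear bracket satisfying $[x,[y,z]]=[[x,y],z]-[[x,z],y]$. A representation $(l,r,V)$ of $L$ is a vector space $V$ with linear maps $l,r:L\to\mathrm{End}_F(V)$ such that $r_{[x,y]}=r_yr_x-r_xr_y$, $l_{[x,y]}=r_yl_x-l_xr_y$, $l_{[x,y]}=r_yl_x+l_xl_y$ (products are compositions). For a subspace $B\subseteq L$, $r_B=\{r_b:b\in B\}$ and $(r_B)^p$ is the span of all compositions $r_{b_1}\cdots r_{b_p}$, $b_i\in B$. For subspaces $X,Y$, $[X,Y]$ is the span of $[u,v]$, $u\in X$, $v\in Y$. Derived series: $D^1(L)=[L,L]$, $D^{n+1}(L)=[D^n(L),D^n(L)]$; $L$ is solvable if some $D^m(L)=0$. $\mathrm{Rad}(L)$ is the largest solvable two-sided ideal of $L$, and $\{\mathrm{Rad}(L),L\}=[\mathrm{Rad}(L),L]+[L,\mathrm{Rad}(L)]$. *)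

theory Defs
  imports Main "HOL-Computational_Algebra.Polynomial"
begin

text \<open>The field: algebraically closed (every nonconstant polynomial has a root).
  Characteristic zero is imposed via the type class field_char_0 in the statement.\<close>
definition alg_closed :: "'k::field itself \<Rightarrow> bool" where
  "alg_closed _ \<longleftrightarrow> (\<forall>p :: 'k poly. degree p > 0 \<longrightarrow> (\<exists>x. poly p x = 0))"

definition fin_dim_vs :: "('k::field \<Rightarrow> 'v::ab_group_add \<Rightarrow> 'v) \<Rightarrow> bool" where
  "fin_dim_vs sc \<longleftrightarrow> vector_space sc \<and> (\<exists>B. finite B \<and> module.span sc B = UNIV)"

text \<open>Right Leibniz algebra: bilinear bracket with [x,[y,z]] = [[x,y],z] - [[x,z],y].\<close>
definition leibniz_algebra ::
  "('k::field \<Rightarrow> 'L::ab_group_add \<Rightarrow> 'L) \<Rightarrow> ('L \<Rightarrow> 'L \<Rightarrow> 'L) \<Rightarrow> bool" where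
  "leibniz_algebra sc br \<longleftrightarrow> vector_space sc
     \<and> (\<forall>x. Vector_Spaces.linear sc sc (br x))
     \<and> (\<forall>y. Vector_Spaces.linear sc sc (\<lambda>x. br x y))
     \<and> (\<forall>x y z. br x (br y z) = br (br x y) z - br (br x z) y)"

definition leibniz_rep ::
  "('k::field \<Rightarrow> 'L::ab_group_add \<Rightarrow> 'L) \<Rightarrow> ('L \<Rightarrow> 'L \<Rightarrow> 'L) \<Rightarrow>
   ('k \<Rightarrow> 'V::ab_group_add \<Rightarrow> 'V) \<Rightarrow> ('L \<Rightarrow> 'V \<Rightarrow> 'V) \<Rightarrow> ('L \<Rightarrow> 'V \<Rightarrow> 'V) \<Rightarrow> bool" where
  "leibniz_rep sc br scV l r \<longleftrightarrow> vector_space scV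
     \<and> (\<forall>x. Vector_Spaces.linear scV scV (l x)) \<and> (\<forall>x. Vector_Spaces.linear scV scV (r x))
     \<and> (\<forall>v. Vector_Spaces.linear sc scV (\<lambda>x. l x v)) \<and> (\<forall>v. Vector_Spaces.linear sc scV (\<lambda>x. r x v))
     \<and> (\<forall>x y v. r (br x y) v = r y (r x v) - r x (r y v))
     \<and> (\<forall>x y v. l (br x y) v = r y (l x v) - l x (r y v))
     \<and> (\<forall>x y v. l (br x y) v = r y (l x v) + l x (l y v))"

definition brk ::
  "('k::field \<Rightarrow> 'L::ab_group_add \<Rightarrow> 'L) \<Rightarrow> ('L \<Rightarrow> 'L \<Rightarrow> 'L) \<Rightarrow> 'L set \<Rightarrow> 'L set \<Rightarrow> 'L set" where
  "brk sc br X Y = module.span sc {br u v | u v. u \<in> X \<and> v \<in> Y}"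

fun derived ::
  "('k::field \<Rightarrow> 'L::ab_group_add \<Rightarrow> 'L) \<Rightarrow> ('L \<Rightarrow> 'L \<Rightarrow> 'L) \<Rightarrow> nat \<Rightarrow> 'L set \<Rightarrow> 'L set" where
  "derived sc br 0 I = I"
| "derived sc br (Suc n) I = brk sc br (derived sc br n I) (derived sc br n I)"

definition solvable_sub ::
  "('k::field \<Rightarrow> 'L::ab_group_add \<Rightarrow> 'L) \<Rightarrow> ('L \<Rightarrow> 'L \<Rightarrow> 'L) \<Rightarrow> 'L set \<Rightarrow> bool" where
  "solvable_sub sc br I \<longleftrightarrow> (\<exists>m. derived sc br m I = {0})"

definition two_sided_ideal ::
  "('k::field \<Rightarrow> 'L::ab_group_add \<Rightarrow> 'L) \<Rightarrow> ('L \<Rightarrow> 'L \<Rightarrow> 'L) \<Rightarrow> 'L set \<Rightarrow> bool" where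
  "two_sided_ideal sc br I \<longleftrightarrow> module.subspace sc I
     \<and> (\<forall>x\<in>I. \<forall>y. br x y \<in> I \<and> br y x \<in> I)"

definition Rad :: "('k::field \<Rightarrow> 'L::ab_group_add \<Rightarrow> 'L) \<Rightarrow> ('L \<Rightarrow> 'L \<Rightarrow> 'L) \<Rightarrow> 'L set" where
  "Rad sc br = (THE R. two_sided_ideal sc br R \<and> solvable_sub sc br R
      \<and> (\<forall>I. two_sided_ideal sc br I \<and> solvable_sub sc br I \<longrightarrow> I \<subseteq> R))"

definition rad_L :: "('k::field \<Rightarrow> 'L::ab_group_add \<Rightarrow> 'L) \<Rightarrow> ('L \<Rightarrow> 'L \<Rightarrow> 'L) \<Rightarrow> 'L set" where
  "rad_L sc br = {a + b | a b. a \<in> brk sc br (Rad sc br) UNIV \<and> b \<in> brk sc br UNIV (Rad sc br)}"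

end

theory Submission
  imports Defs "Jordan_Normal_Form.Char_Poly"
begin


lemma mat_eigen_exists:
  fixes M :: "nat \<Rightarrow> nat \<Rightarrow> 'k::field"
  assumes ac: "alg_closed TYPE('k)" and n: "n \<ge> 1"
  shows "\<exists>c u. (\<exists>i<n. u i \<noteq> 0) \<and> (\<forall>i<n. (\<Sum>j<n. M i j * u j) = c * u i)"
proof -
  define A where "A = mat n n (\<lambda>(i,j). M i j)"
  have A: "A \<in> carrier_mat n n" unfolding A_def by auto
  have "degree (char_poly A) > 0" using degree_monic_char_poly[OF A] n by auto
  then obtain c where "poly (char_poly A) c = 0" using ac unfolding alg_closed_def by blast
  then have "eigenvalue A c" using eigenvalue_root_char_poly[OF A] by blast
  then obtain v where v: "v \<in> carrier_vec n" "v \<noteq> 0\<^sub>v n" "A *\<^sub>v v = c \<cdot>\<^sub>v v"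
    unfolding eigenvalue_def eigenvector_def using A by auto
  have nz: "\<exists>i<n. v $ i \<noteq> 0"
  proof (rule ccontr)
    assume "\<not> ?thesis"
    then have "v = 0\<^sub>v n" using v(1) by (intro eq_vecI) auto
    then show False using v(2) by simp
  qed
  have "\<forall>i<n. (\<Sum>j<n. M i j * v $ j) = c * v $ i"
  proof (intro allI impI)
    fix i assume i: "i < n"
    have "(A *\<^sub>v v) $ i = (c \<cdot>\<^sub>v v) $ i" using v(3) by simp
    then show "(\<Sum>j<n. M i j * v $ j) = c * v $ i"
      using i v(1) unfolding A_def by (simp add: scalar_prod_def row_def lessThan_atLeast0)
  qed
  then show ?thesis using nz by blast
qed


locale fdvs = vector_space sc
  for sc :: "'k::field_char_0 \<Rightarrow> 'V::ab_group_add \<Rightarrow> 'V" (infixr \<open>*s\<close> 75) +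
  assumes fin_span: "\<exists>B. finite B \<and> span B = UNIV"
begin

abbreviation lin where "lin T \<equiv> Vector_Spaces.linear sc sc T"

lemma lin_facts:
  assumes "lin T"
  shows lin_add: "T (u + v) = T u + T v" and lin_scale: "T (c *s v) = c *s T v"
    and lin_zero: "T 0 = 0" and lin_diff: "T (u - v) = T u - T v"
    and lin_sum: "T (sum f A) = (\<Sum>i\<in>A. T (f i))"
proof -
  interpret Vector_Spaces.linear sc sc T by fact
  show "T (u + v) = T u + T v" by (rule add)
  show "T (c *s v) = c *s T v" by (rule scale)
  show "T 0 = 0" by (rule zero)
  show "T (u - v) = T u - T v" by (rule diff)
  show "T (sum f A) = (\<Sum>i\<in>A. T (f i))" by (rule sum)
qed

definition modspan :: "'V set \<Rightarrow> nat \<Rightarrow> (nat \<Rightarrow> 'V) \<Rightarrow> 'V set" where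
  "modspan Y n z = {v. \<exists>t. v - (\<Sum>i<n. t i *s z i) \<in> Y}"

lemma msI: "v - (\<Sum>i<n. t i *s z i) \<in> Y \<Longrightarrow> v \<in> modspan Y n z"
  unfolding modspan_def by blast

definition indep_mod :: "'V set \<Rightarrow> nat \<Rightarrow> (nat \<Rightarrow> 'V) \<Rightarrow> bool" where
  "indep_mod Y n z \<longleftrightarrow> (\<forall>t. (\<Sum>i<n. t i *s z i) \<in> Y \<longrightarrow> (\<forall>i<n. t i = 0))"

lemma ms_subspace:
  assumes Y: "subspace Y" shows "subspace (modspan Y n z)"
proof (rule subspaceI)
  show "0 \<in> modspan Y n z" unfolding modspan_def
    by (rule CollectI, rule exI[of _ "\<lambda>_. 0"]) (simp add: subspace_0[OF Y])
next
  fix x y assume "x \<in> modspan Y n z" "y \<in> modspan Y n z"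
  then obtain t s where t: "x - (\<Sum>i<n. t i *s z i) \<in> Y" and s: "y - (\<Sum>i<n. s i *s z i) \<in> Y"
    unfolding modspan_def by blast
  have eq: "x + y - (\<Sum>i<n. (t i + s i) *s z i) = (x - (\<Sum>i<n. t i *s z i)) + (y - (\<Sum>i<n. s i *s z i))"
    by (simp add: scale_left_distrib sum.distrib algebra_simps)
  have "x + y - (\<Sum>i<n. (t i + s i) *s z i) \<in> Y" unfolding eq by (rule subspace_add[OF Y t s])
  then show "x + y \<in> modspan Y n z" by (rule msI)
next
  fix c x assume "x \<in> modspan Y n z"
  then obtain t where t: "x - (\<Sum>i<n. t i *s z i) \<in> Y" unfolding modspan_def by blast
  have eq: "c *s x - (\<Sum>i<n. (c * t i) *s z i) = c *s (x - (\<Sum>i<n. t i *s z i))"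
    by (simp add: scale_right_diff_distrib scale_sum_right)
  have "c *s x - (\<Sum>i<n. (c * t i) *s z i) \<in> Y" unfolding eq by (rule subspace_scale[OF Y t])
  then show "c *s x \<in> modspan Y n z" by (rule msI)
qed

lemma ms_Y: assumes "subspace Y" shows "Y \<subseteq> modspan Y n z"
  unfolding modspan_def by (auto intro!: exI[of _ "\<lambda>_. 0"])

lemma ms_z: assumes Y: "subspace Y" and i: "i < n" shows "z i \<in> modspan Y n z"
proof -
  have "(\<Sum>k<n. (if k = i then 1 else 0) *s z k) = z i"
    using i by (simp add: if_distrib[of "\<lambda>r. r *s _"] sum.delta cong: if_cong)
  then show ?thesis unfolding modspan_def using subspace_0[OF Y]
    by (auto intro!: exI[of _ "\<lambda>k. if k = i then 1 else 0"])
qed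

lemma ms_closed:
  assumes Y: "subspace Y" and S: "subspace S" "Y \<subseteq> S" "\<forall>i<n. z i \<in> S"
  shows "modspan Y n z \<subseteq> S"
proof
  fix v assume "v \<in> modspan Y n z"
  then obtain t where t: "v - (\<Sum>i<n. t i *s z i) \<in> Y" unfolding modspan_def by blast
  have "(\<Sum>i<n. t i *s z i) \<in> S" using S by (intro subspace_sum) (auto intro: subspace_scale)
  then have "(v - (\<Sum>i<n. t i *s z i)) + (\<Sum>i<n. t i *s z i) \<in> S"
    using t S by (intro subspace_add) auto
  then show "v \<in> S" by simp
qed

lemma ms_mono: assumes Y: "subspace Y" and "m \<le> n" shows "modspan Y m z \<subseteq> modspan Y n z"
  using assms by (intro ms_closed ms_subspace ms_Y) (auto intro: ms_z)

lemma ms_linear: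
  assumes Y: "subspace Y" and T: "lin T" "T ` Y \<subseteq> Y" "\<forall>i<n. T (z i) \<in> modspan Y n z"
    and v: "v \<in> modspan Y n z"
  shows "T v \<in> modspan Y n z"
proof -
  obtain t where t: "v - (\<Sum>i<n. t i *s z i) \<in> Y" using v unfolding modspan_def by blast
  let ?y = "v - (\<Sum>i<n. t i *s z i)"
  have e1: "T v = T ?y + T (\<Sum>i<n. t i *s z i)" using lin_add[OF T(1), of ?y "\<Sum>i<n. t i *s z i"] by simp
  have e2: "T (\<Sum>i<n. t i *s z i) = (\<Sum>i<n. t i *s T (z i))" by (simp add: lin_sum[OF T(1)] lin_scale[OF T(1)])
  have "T v = T ?y + (\<Sum>i<n. t i *s T (z i))" using e1 e2 by simp
  moreover have "T ?y \<in> modspan Y n z" using t T(2) ms_Y[OF Y] by blast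
  moreover have "(\<Sum>i<n. t i *s T (z i)) \<in> modspan Y n z"
    using T(3) by (intro subspace_sum[OF ms_subspace[OF Y]] subspace_scale[OF ms_subspace[OF Y]]) auto
  ultimately show ?thesis using subspace_add[OF ms_subspace[OF Y]] by simp
qed

lemma ms_Suc: "v \<in> modspan Y (Suc n) z \<longleftrightarrow> (\<exists>c. v - c *s z n \<in> modspan Y n z)"
proof
  assume "v \<in> modspan Y (Suc n) z"
  then obtain t where "v - (\<Sum>i<Suc n. t i *s z i) \<in> Y" unfolding modspan_def by blast
  then have "(v - t n *s z n) - (\<Sum>i<n. t i *s z i) \<in> Y" by (simp add: algebra_simps)
  then show "\<exists>c. v - c *s z n \<in> modspan Y n z" unfolding modspan_def by blast
next
  assume "\<exists>c. v - c *s z n \<in> modspan Y n z"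
  then obtain c t where "(v - c *s z n) - (\<Sum>i<n. t i *s z i) \<in> Y" unfolding modspan_def by blast
  moreover have "(\<Sum>i<Suc n. (t(n := c)) i *s z i) = (\<Sum>i<n. t i *s z i) + c *s z n"
    by (simp add: sum.lessThan_Suc)
  ultimately have "v - (\<Sum>i<Suc n. (t(n := c)) i *s z i) \<in> Y" by (simp add: algebra_simps)
  then show "v \<in> modspan Y (Suc n) z" unfolding modspan_def by blast
qed

lemma indep_coeff:
  assumes Y: "subspace Y" and ind: "indep_mod Y n z"
    and d: "(\<Sum>i<n. s i *s z i) - (\<Sum>i<n. t i *s z i) \<in> Y" and i: "i < n"
  shows "s i = t i"
proof -
  have "(\<Sum>i<n. (s i - t i) *s z i) = (\<Sum>i<n. s i *s z i) - (\<Sum>i<n. t i *s z i)"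
    by (simp add: scale_left_diff_distrib sum_subtractf)
  then show ?thesis using ind d i unfolding indep_mod_def by (metis right_minus_eq)
qed

lemma indep_mono: assumes "indep_mod Y (Suc n) z" shows "indep_mod Y n z"
  unfolding indep_mod_def
proof (intro allI impI)
  fix t i assume "(\<Sum>i<n. t i *s z i) \<in> Y" "i < n"
  moreover have "(\<Sum>i<Suc n. (t(n := 0)) i *s z i) = (\<Sum>i<n. t i *s z i)"
    by (simp add: sum.lessThan_Suc)
  ultimately show "t i = 0" using assms unfolding indep_mod_def
    by (metis fun_upd_other less_Suc_eq nat_neq_iff)
qed

lemma indep_Suc:
  assumes Y: "subspace Y" and ind: "indep_mod Y n z" and zn: "z n \<notin> modspan Y n z"
  shows "indep_mod Y (Suc n) z"
  unfolding indep_mod_def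
proof (intro allI impI)
  fix t i assume s: "(\<Sum>i<Suc n. t i *s z i) \<in> Y" and i: "i < Suc n"
  have tn: "t n = 0"
  proof (rule ccontr)
    assume tn: "t n \<noteq> 0"
    have "(- inverse (t n)) *s (\<Sum>i<Suc n. t i *s z i) \<in> Y" using s by (rule subspace_scale[OF Y])
    moreover have "(- inverse (t n)) *s (\<Sum>i<Suc n. t i *s z i)
        = - (z n - (\<Sum>i<n. (- inverse (t n) * t i) *s z i))"
      using tn by (simp add: sum.lessThan_Suc scale_sum_right algebra_simps)
    ultimately have "z n - (\<Sum>i<n. (- inverse (t n) * t i) *s z i) \<in> Y"
      using subspace_neg[OF Y] by fastforce
    then have "z n \<in> modspan Y n z" by (rule msI)
    then show False using zn by simp
  qed
  then have "(\<Sum>i<n. t i *s z i) \<in> Y" using s by (simp add: sum.lessThan_Suc)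
  then show "t i = 0" using ind i tn unfolding indep_mod_def by (metis less_Suc_eq)
qed

lemma indep_bound: "\<exists>N. \<forall>Y n z. subspace Y \<and> indep_mod Y n z \<longrightarrow> n \<le> N"
proof -
  obtain B where B: "finite B" "span B = UNIV" using fin_span by blast
  have "n \<le> card B" if Y: "subspace Y" and ind: "indep_mod Y n z" for Y n z
  proof -
    have inj: "inj_on z {..<n}"
    proof (rule inj_onI)
      fix i j assume i: "i \<in> {..<n}" and j: "j \<in> {..<n}" and e: "z i = z j"
      show "i = j"
      proof (rule ccontr)
        assume ne: "i \<noteq> j"
        let ?t = "\<lambda>k. (if k = i then 1 else 0) - (if k = j then 1 else (0::'k))"
        have "(\<Sum>k<n. ?t k *s z k) = (\<Sum>k<n. (if k = i then 1 else 0) *s z k) - (\<Sum>k<n. (if k = j then 1 else 0) *s z k)"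
          by (simp add: scale_left_diff_distrib sum_subtractf)
        also have "\<dots> = z i - z j" using i j
          by (simp add: if_distrib[of "\<lambda>r. r *s _"] sum.delta cong: if_cong)
        finally have "(\<Sum>k<n. ?t k *s z k) \<in> Y" using e subspace_0[OF Y] by simp
        then have "?t i = 0" using ind[unfolded indep_mod_def, rule_format, of ?t i] i by simp
        then show False using ne by simp
      qed
    qed
    have "independent (z ` {..<n})"
    proof -
      have "\<not> (\<exists>u. (\<exists>v\<in>z ` {..<n}. u v \<noteq> 0) \<and> (\<Sum>v\<in>z ` {..<n}. u v *s v) = 0)"
      proof
        assume "\<exists>u. (\<exists>v\<in>z ` {..<n}. u v \<noteq> 0) \<and> (\<Sum>v\<in>z ` {..<n}. u v *s v) = 0"
        then obtain c v where s: "(\<Sum>v\<in>z ` {..<n}. c v *s v) = 0" and v: "v \<in> z ` {..<n}" "c v \<noteq> 0"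
          by blast
        have "(\<Sum>k<n. c (z k) *s z k) = 0" using s by (simp add: sum.reindex[OF inj])
        then have "\<forall>k<n. c (z k) = 0"
          using ind[unfolded indep_mod_def, rule_format, of "\<lambda>k. c (z k)"] subspace_0[OF Y] by simp
        then show False using v by auto
      qed
      then show ?thesis using dependent_finite[of "z ` {..<n}"] by simp
    qed
    then have "card (z ` {..<n}) \<le> card B" using independent_span_bound[OF B(1)] B(2) by blast
    then show ?thesis using card_image[OF inj] by simp
  qed
  then show ?thesis by blast
qed

lemma qbasis_exists:
  assumes Y: "subspace Y" and Z: "subspace Z" "Y \<subseteq> Z"
  shows "\<exists>n z. (\<forall>i<n. z i \<in> Z) \<and> indep_mod Y n z \<and> modspan Y n z = Z"
proof -
  obtain N where N: "\<And>n z. indep_mod Y n z \<Longrightarrow> n \<le> N" using indep_bound Y by blast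
  let ?S = "{n. \<exists>z. (\<forall>i<n. z i \<in> Z) \<and> indep_mod Y n z}"
  have "0 \<in> ?S" unfolding indep_mod_def by simp
  have "?S \<subseteq> {..N}" using N by blast
  then have fin: "finite ?S" by (rule finite_subset) simp
  define m where "m = Max ?S"
  have "?S \<noteq> {}" using \<open>0 \<in> ?S\<close> by blast
  then have "m \<in> ?S" unfolding m_def using fin by (intro Max_in)
  then obtain z where z: "\<forall>i<m. z i \<in> Z" "indep_mod Y m z" by blast
  have sub: "modspan Y m z \<subseteq> Z" using ms_closed[OF Y Z(1) Z(2) z(1)] .
  have "Z \<subseteq> modspan Y m z"
  proof
    fix v assume v: "v \<in> Z"
    show "v \<in> modspan Y m z"
    proof (rule ccontr)
      assume nv: "v \<notin> modspan Y m z"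
      let ?z = "z(m := v)"
      have eqs: "\<And>t. (\<Sum>i<m. t i *s ?z i) = (\<Sum>i<m. t i *s z i)" by (intro sum.cong) auto
      have eqms: "modspan Y m ?z = modspan Y m z" unfolding modspan_def eqs ..
      have eqind: "indep_mod Y m ?z" using z(2) unfolding indep_mod_def eqs .
      have "indep_mod Y (Suc m) ?z" using indep_Suc[OF Y eqind] nv eqms by simp
      moreover have "\<forall>i<Suc m. ?z i \<in> Z" using z(1) v by (simp add: less_Suc_eq)
      ultimately have "Suc m \<in> ?S" by blast
      then have "Suc m \<le> m" unfolding m_def by (rule Max_ge[OF fin])
      then show False by simp
    qed
  qed
  then have "modspan Y m z = Z" using sub by (rule equalityI[rotated])
  then show ?thesis using z by (intro exI[of _ m] exI[of _ z]) simp
qed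

lemma krylov:
  assumes Y: "subspace Y" and w: "w \<notin> Y"
  shows "\<exists>n\<ge>1. indep_mod Y n (\<lambda>i. (T ^^ i) w) \<and> (T ^^ n) w \<in> modspan Y n (\<lambda>i. (T ^^ i) w)"
proof -
  let ?z = "\<lambda>i. (T ^^ i) w"
  let ?P = "\<lambda>k. indep_mod Y k ?z"
  obtain N where N: "\<And>n z. indep_mod Y n z \<Longrightarrow> n \<le> N" using indep_bound Y by blast
  have P1: "?P 1" unfolding indep_mod_def
  proof (intro allI impI)
    fix t i assume s: "(\<Sum>i<1. t i *s ?z i) \<in> Y" and i: "i < (1::nat)"
    then have "t 0 *s w \<in> Y" by simp
    show "t i = 0"
    proof (rule ccontr)
      assume "t i \<noteq> 0"
      then have "t 0 \<noteq> 0" using i by simp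
      then have "inverse (t 0) *s (t 0 *s w) \<in> Y" using \<open>t 0 *s w \<in> Y\<close> subspace_scale[OF Y] by blast
      then show False using w \<open>t 0 \<noteq> 0\<close> by simp
    qed
  qed
  have ex: "\<not> ?P (Suc N)" using N[of "Suc N"] by auto
  define k where "k = (LEAST k. \<not> ?P (Suc k))"
  have k: "\<not> ?P (Suc k)" unfolding k_def using ex by (rule LeastI)
  have k1: "k \<ge> 1" using k P1 by (cases k) auto
  have Pk: "?P k"
  proof -
    have "k - 1 < k" using k1 by simp
    then have "?P (Suc (k - 1))" using not_less_Least[of "k - 1" "\<lambda>k. \<not> ?P (Suc k)"] unfolding k_def by blast
    then show ?thesis using k1 by simp
  qed
  have "?z k \<in> modspan Y k ?z" using indep_Suc[OF Y Pk] k by blast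
  then show ?thesis using k1 Pk by blast
qed

lemma sum_swap_scale:
  "(\<Sum>j<n. u j *s (\<Sum>i<n. a i j *s z i)) = (\<Sum>i<n. (\<Sum>j<n. a i j * u j) *s z i)"
proof -
  have "(\<Sum>j<n. u j *s (\<Sum>i<n. a i j *s z i)) = (\<Sum>j<n. \<Sum>i<n. (u j * a i j) *s z i)"
    by (simp add: scale_sum_right)
  also have "\<dots> = (\<Sum>i<n. \<Sum>j<n. (u j * a i j) *s z i)" by (rule sum.swap)
  also have "\<dots> = (\<Sum>i<n. (\<Sum>j<n. a i j * u j) *s z i)"
    by (rule sum.cong[OF refl]) (simp add: scale_sum_left mult.commute)
  finally show ?thesis .
qed

lemma choose_matrix:
  assumes "\<forall>j<n. A (z j) \<in> modspan Y n z"
  shows "\<exists>a. \<forall>j<n. A (z j) - (\<Sum>i<n. a i j *s z i) \<in> Y"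
proof -
  have "\<forall>j. \<exists>t. j < n \<longrightarrow> A (z j) - (\<Sum>i<n. t i *s z i) \<in> Y"
    using assms unfolding modspan_def by blast
  from choice[OF this] obtain f where "\<forall>j. j < n \<longrightarrow> A (z j) - (\<Sum>i<n. f j i *s z i) \<in> Y" by blast
  then show ?thesis by (intro exI[of _ "\<lambda>i j. f j i"]) auto
qed

lemma apply_matrix:
  assumes Y: "subspace Y" and A: "lin A" "A ` Y \<subseteq> Y"
    and a: "\<forall>j<n. A (z j) - (\<Sum>i<n. a i j *s z i) \<in> Y"
  shows "A (\<Sum>j<n. u j *s z j) - (\<Sum>i<n. (\<Sum>j<n. a i j * u j) *s z i) \<in> Y"
proof -
  have "A (\<Sum>j<n. u j *s z j) - (\<Sum>i<n. (\<Sum>j<n. a i j * u j) *s z i)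
      = (\<Sum>j<n. u j *s (A (z j) - (\<Sum>i<n. a i j *s z i)))"
  proof -
    have "A (\<Sum>j<n. u j *s z j) = (\<Sum>j<n. u j *s A (z j))"
      by (simp add: lin_sum[OF A(1)] lin_scale[OF A(1)])
    moreover have "(\<Sum>i<n. (\<Sum>j<n. a i j * u j) *s z i) = (\<Sum>j<n. u j *s (\<Sum>i<n. a i j *s z i))"
      by (rule sum_swap_scale[symmetric])
    moreover have "(\<Sum>j<n. u j *s (A (z j) - (\<Sum>i<n. a i j *s z i)))
       = (\<Sum>j<n. u j *s A (z j)) - (\<Sum>j<n. u j *s (\<Sum>i<n. a i j *s z i))"
      by (simp only: scale_right_diff_distrib sum_subtractf)
    ultimately show ?thesis by simp
  qed
  also have "\<dots> \<in> Y" using a by (intro subspace_sum[OF Y] subspace_scale[OF Y]) auto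
  finally show ?thesis .
qed

lemma eigen_mod:
  assumes ac: "alg_closed TYPE('k)" and Y: "subspace Y" and ind: "indep_mod Y n z" and n: "n \<ge> 1"
    and T: "lin T" "T ` Y \<subseteq> Y" "\<forall>j<n. T (z j) \<in> modspan Y n z"
  shows "\<exists>v \<in> modspan Y n z. v \<notin> Y \<and> (\<exists>c. T v - c *s v \<in> Y)"
proof -
  obtain a where a: "\<forall>j<n. T (z j) - (\<Sum>i<n. a i j *s z i) \<in> Y" using choose_matrix[OF T(3)] by blast
  obtain c u where cu: "\<exists>i<n. u i \<noteq> 0" "\<forall>i<n. (\<Sum>j<n. a i j * u j) = c * u i"
    using mat_eigen_exists[OF ac n] by blast
  define v where "v = (\<Sum>j<n. u j *s z j)"
  have vin: "v \<in> modspan Y n z" unfolding v_def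
    by (intro subspace_sum[OF ms_subspace[OF Y]] subspace_scale[OF ms_subspace[OF Y]] ms_z[OF Y]) auto
  have "v \<notin> Y" using cu(1) ind unfolding indep_mod_def v_def by blast
  moreover have "T v - c *s v \<in> Y"
  proof -
    have "T v - (\<Sum>i<n. (\<Sum>j<n. a i j * u j) *s z i) \<in> Y"
      unfolding v_def by (rule apply_matrix[OF Y T(1) T(2) a])
    moreover have "(\<Sum>i<n. (\<Sum>j<n. a i j * u j) *s z i) = c *s v"
      unfolding v_def using cu(2) by (simp add: scale_sum_right)
    ultimately show ?thesis by simp
  qed
  ultimately show ?thesis using vin by blast
qed

lemma sum_tri:
  "j < (n::nat) \<Longrightarrow> (\<Sum>i<n. (if i < j then t i else if i = j then \<mu> else 0) *s z i) = \<mu> *s z j + (\<Sum>i<j. t i *s z i)"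
proof (induction n)
  case 0 then show ?case by simp
next
  case (Suc n)
  show ?case
  proof (cases "j = n")
    case True
    then show ?thesis by (simp add: sum.lessThan_Suc)
  next
    case False
    then show ?thesis using Suc by (simp add: sum.lessThan_Suc)
  qed
qed

lemma trace_zero:
  assumes Y: "subspace Y" and ind: "indep_mod Y n z" and n: "n \<ge> 1"
    and A: "lin A" "A ` Y \<subseteq> Y" "\<forall>j<n. A (z j) \<in> modspan Y n z"
    and B: "lin B" "B ` Y \<subseteq> Y" "\<forall>j<n. B (z j) \<in> modspan Y n z"
    and tri: "\<forall>j<n. A (B (z j)) - B (A (z j)) - \<mu> *s z j \<in> modspan Y j z"
  shows "\<mu> = 0"
proof -
  obtain a where a: "\<forall>j<n. A (z j) - (\<Sum>i<n. a i j *s z i) \<in> Y" using choose_matrix[OF A(3)] by blast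
  obtain b where b: "\<forall>j<n. B (z j) - (\<Sum>i<n. b i j *s z i) \<in> Y" using choose_matrix[OF B(3)] by blast
  define d where "d i j = (\<Sum>k<n. a i k * b k j) - (\<Sum>k<n. b i k * a k j)" for i j
  have dj: "d j j = \<mu>" if j: "j < n" for j
  proof -
    have AB: "A (B (z j)) - (\<Sum>i<n. (\<Sum>k<n. a i k * b k j) *s z i) \<in> Y"
    proof -
      have "A (B (z j)) - A (\<Sum>k<n. b k j *s z k) \<in> Y"
        using b j A(2) by (metis image_subset_iff lin_diff[OF A(1)])
      moreover have "A (\<Sum>k<n. b k j *s z k) - (\<Sum>i<n. (\<Sum>k<n. a i k * b k j) *s z i) \<in> Y"
        by (rule apply_matrix[OF Y A(1) A(2) a])
      ultimately show ?thesis using subspace_add[OF Y] by fastforce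
    qed
    have BA: "B (A (z j)) - (\<Sum>i<n. (\<Sum>k<n. b i k * a k j) *s z i) \<in> Y"
    proof -
      have "B (A (z j)) - B (\<Sum>k<n. a k j *s z k) \<in> Y"
        using a j B(2) by (metis image_subset_iff lin_diff[OF B(1)])
      moreover have "B (\<Sum>k<n. a k j *s z k) - (\<Sum>i<n. (\<Sum>k<n. b i k * a k j) *s z i) \<in> Y"
        by (rule apply_matrix[OF Y B(1) B(2) b])
      ultimately show ?thesis using subspace_add[OF Y] by fastforce
    qed
    have D: "A (B (z j)) - B (A (z j)) - (\<Sum>i<n. d i j *s z i) \<in> Y"
    proof -
      have eqd: "(\<Sum>i<n. d i j *s z i) = (\<Sum>i<n. (\<Sum>k<n. a i k * b k j) *s z i) - (\<Sum>i<n. (\<Sum>k<n. b i k * a k j) *s z i)"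
        unfolding d_def by (simp add: scale_left_diff_distrib sum_subtractf)
      have "A (B (z j)) - B (A (z j)) - (\<Sum>i<n. d i j *s z i)
          = (A (B (z j)) - (\<Sum>i<n. (\<Sum>k<n. a i k * b k j) *s z i)) - (B (A (z j)) - (\<Sum>i<n. (\<Sum>k<n. b i k * a k j) *s z i))"
        unfolding eqd by (simp add: algebra_simps)
      then show ?thesis by (simp only:) (rule subspace_diff[OF Y AB BA])
    qed
    obtain t where t: "A (B (z j)) - B (A (z j)) - \<mu> *s z j - (\<Sum>i<j. t i *s z i) \<in> Y"
      using tri j unfolding modspan_def by blast
    let ?t = "\<lambda>i. if i < j then t i else if i = j then \<mu> else 0"
    have "(\<Sum>i<n. d i j *s z i) - (\<Sum>i<n. ?t i *s z i) \<in> Y"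
    proof -
      have "(\<Sum>i<n. d i j *s z i) - (\<Sum>i<n. ?t i *s z i)
          = (A (B (z j)) - B (A (z j)) - \<mu> *s z j - (\<Sum>i<j. t i *s z i)) - (A (B (z j)) - B (A (z j)) - (\<Sum>i<n. d i j *s z i))"
        using sum_tri[OF j, of t \<mu> z] by (simp add: algebra_simps)
      then show ?thesis by (simp only:) (rule subspace_diff[OF Y t D])
    qed
    from indep_coeff[OF Y ind this j] show ?thesis by simp
  qed
  have s1: "(\<Sum>j<n. \<Sum>k<n. b j k * a k j) = (\<Sum>j<n. \<Sum>k<n. a j k * b k j)"
    by (subst sum.swap) (simp add: mult.commute)
  have "(\<Sum>j<n. d j j) = 0"
    unfolding d_def sum_subtractf s1 by simp
  moreover have "(\<Sum>j<n. d j j) = of_nat n * \<mu>" using dj by simp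
  ultimately show ?thesis using n by simp
qed

end


context fdvs begin

lemma fd_basis: "\<exists>B. finite B \<and> independent B \<and> span B = UNIV"
proof -
  obtain B where B: "independent B" "UNIV \<subseteq> span B" using maximal_independent_subset[of UNIV] by blast
  obtain F where F: "finite F" "span F = UNIV" using fin_span by blast
  have "finite B" using independent_span_bound[OF F(1) B(1)] F(2) by blast
  then show ?thesis using B by blast
qed

lemma dim_facts:
  shows dim_mono2: "S \<subseteq> T \<Longrightarrow> dim S \<le> dim T"
    and dim_strict: "subspace S \<Longrightarrow> subspace T \<Longrightarrow> S \<subseteq> T \<Longrightarrow> S \<noteq> T \<Longrightarrow> dim S < dim T"
    and dim_bound: "dim S \<le> dim (UNIV::'V set)"
proof -
  obtain B where B: "finite B" "independent B" "span B = UNIV" using fd_basis by blast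
  interpret FD: finite_dimensional_vector_space sc B by unfold_locales (use B in auto)
  show "S \<subseteq> T \<Longrightarrow> dim S \<le> dim T" by (rule FD.dim_subset)
  show "dim S \<le> dim (UNIV::'V set)" by (rule FD.dim_subset) simp
  assume "subspace S" "subspace T" "S \<subseteq> T" "S \<noteq> T"
  then show "dim S < dim T" using FD.subspace_dim_equal[of S T] FD.dim_subset[of S T] by linarith
qed

lemma ms0: assumes "subspace Y" shows "modspan Y 0 z = Y"
  unfolding modspan_def by simp

lemma common_eigen:
  fixes A :: "nat \<Rightarrow> 'V \<Rightarrow> 'V" and p :: nat
  assumes ac: "alg_closed TYPE('k)" and Y: "subspace Y" and X: "subspace X" "Y \<subseteq> X" "Y \<noteq> X"
    and A: "\<forall>i<p. lin (A i) \<and> A i ` Y \<subseteq> Y \<and> A i ` X \<subseteq> X"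
    and comm: "\<forall>i<p. \<forall>j<p. \<forall>w\<in>X. A i (A j w) - A j (A i w) \<in> Y"
  shows "\<exists>v\<in>X. v \<notin> Y \<and> (\<exists>c. \<forall>i<p. A i v - c i *s v \<in> Y)"
proof -
  have "q \<le> p \<Longrightarrow> \<exists>v\<in>X. v \<notin> Y \<and> (\<exists>c. \<forall>i<q. A i v - c i *s v \<in> Y)" for q
  proof (induction q)
    case 0
    then show ?case using X by blast
  next
    case (Suc q)
    then obtain v c where v: "v \<in> X" "v \<notin> Y" "\<forall>i<q. A i v - c i *s v \<in> Y" by auto
    have qp: "q < p" using Suc by simp
    define Z where "Z = {w\<in>X. \<forall>i<q. A i w - c i *s w \<in> Y}"
    have linA: "lin (A i)" "A i ` Y \<subseteq> Y" "A i ` X \<subseteq> X" if "i < p" for i using A that by auto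
    have Zsub: "subspace Z"
    proof (rule subspaceI)
      show "0 \<in> Z" unfolding Z_def using X subspace_0[OF X(1)] subspace_0[OF Y] linA qp
        by (auto simp: lin_zero)
    next
      fix x y assume "x \<in> Z" "y \<in> Z"
      then have "x \<in> X" "y \<in> X" and hx: "\<forall>i<q. A i x - c i *s x \<in> Y"
        and hy: "\<forall>i<q. A i y - c i *s y \<in> Y" unfolding Z_def by auto
      have "x + y \<in> X" using \<open>x \<in> X\<close> \<open>y \<in> X\<close> by (rule subspace_add[OF X(1)])
      moreover have "A i (x + y) - c i *s (x + y) \<in> Y" if i: "i < q" for i
      proof -
        have "A i (x + y) - c i *s (x + y) = (A i x - c i *s x) + (A i y - c i *s y)"
          using linA(1)[of i] i qp by (simp add: lin_add scale_right_distrib)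
        then show ?thesis using hx hy i subspace_add[OF Y] by simp
      qed
      ultimately show "x + y \<in> Z" unfolding Z_def by blast
    next
      fix a x assume "x \<in> Z"
      then have "x \<in> X" and hx: "\<forall>i<q. A i x - c i *s x \<in> Y" unfolding Z_def by auto
      have "a *s x \<in> X" using \<open>x \<in> X\<close> by (rule subspace_scale[OF X(1)])
      moreover have "A i (a *s x) - c i *s (a *s x) \<in> Y" if i: "i < q" for i
      proof -
        have "A i (a *s x) - c i *s (a *s x) = a *s (A i x - c i *s x)"
          using linA(1)[of i] i qp by (simp add: lin_scale scale_right_diff_distrib mult.commute)
        then show ?thesis using hx i subspace_scale[OF Y] by simp
      qed
      ultimately show "a *s x \<in> Z" unfolding Z_def by blast
    qed
    have YZ: "Y \<subseteq> Z"
    proof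
      fix y assume y: "y \<in> Y"
      have "A i y - c i *s y \<in> Y" if "i < q" for i
        using y that qp linA[of i] by (intro subspace_diff[OF Y] subspace_scale[OF Y]) auto
      then show "y \<in> Z" unfolding Z_def using y X(2) by auto
    qed
    have vZ: "v \<in> Z" unfolding Z_def using v by auto
    have ZX: "Z \<subseteq> X" unfolding Z_def by auto
    have TZ: "A q w \<in> Z" if w: "w \<in> Z" for w
    proof -
      have wX: "w \<in> X" using w ZX by auto
      have "A i (A q w) - c i *s A q w \<in> Y" if i: "i < q" for i
      proof -
        have eq: "A i (A q w) - c i *s A q w = (A i (A q w) - A q (A i w)) + A q (A i w - c i *s w)"
          using linA(1)[OF qp] by (simp add: lin_diff lin_scale)
        have h1: "A i (A q w) - A q (A i w) \<in> Y" using comm i qp wX by auto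
        have h2: "A q (A i w - c i *s w) \<in> Y" using w i linA(2)[OF qp] unfolding Z_def by auto
        show ?thesis unfolding eq by (rule subspace_add[OF Y h1 h2])
      qed
      moreover have "A q w \<in> X" using linA(3)[OF qp] wX by auto
      ultimately show ?thesis unfolding Z_def by auto
    qed
    obtain n zs where zs: "\<forall>i<n. zs i \<in> Z" "indep_mod Y n zs" "modspan Y n zs = Z"
      using qbasis_exists[OF Y Zsub YZ] by blast
    have n: "n \<ge> 1"
    proof (rule ccontr)
      assume "\<not> n \<ge> 1"
      then have "n = 0" by simp
      then have "Z = Y" using zs(3) ms0[OF Y] by simp
      then show False using vZ v(2) by simp
    qed
    obtain v' c' where v': "v' \<in> modspan Y n zs" "v' \<notin> Y" "A q v' - c' *s v' \<in> Y"
      using eigen_mod[OF ac Y zs(2) n linA(1)[OF qp] linA(2)[OF qp]] zs TZ by auto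
    have "\<forall>i<Suc q. A i v' - (c(q := c')) i *s v' \<in> Y"
      using v' zs(3) unfolding Z_def by (auto simp: less_Suc_eq)
    then show ?case using v' zs(3) ZX by blast
  qed
  then show ?thesis by blast
qed

end


lemma lin_gen:
  assumes "Vector_Spaces.linear s1 s2 f"
  shows "f (a + b) = f a + f b" and "f (s1 c a) = s2 c (f a)" and "f 0 = 0"
    and "f (a - b) = f a - f b" and "f (sum g A) = (\<Sum>i\<in>A. f (g i))"
proof -
  interpret Vector_Spaces.linear s1 s2 f by fact
  show "f (a + b) = f a + f b" by (rule add)
  show "f (s1 c a) = s2 c (f a)" by (rule scale)
  show "f 0 = 0" by (rule zero)
  show "f (a - b) = f a - f b" by (rule diff)
  show "f (sum g A) = (\<Sum>i\<in>A. f (g i))" by (rule sum)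
qed

lemma preimage_subspace:
  assumes "Vector_Spaces.linear s1 s2 f" "module.subspace s2 T"
  shows "module.subspace s1 {x. f x \<in> T}"
proof -
  interpret Vector_Spaces.linear s1 s2 f by fact
  show ?thesis using subspace_vimage[OF assms(2)] by (simp add: vimage_def)
qed

context fdvs begin

definition sumset :: "'V set \<Rightarrow> 'V set \<Rightarrow> 'V set" where
  "sumset I J = {a + b | a b. a \<in> I \<and> b \<in> J}"

lemma sumset_subspace:
  assumes I: "subspace I" and J: "subspace J" shows "subspace (sumset I J)"
proof (rule subspaceI)
  show "0 \<in> sumset I J" unfolding sumset_def using subspace_0[OF I] subspace_0[OF J] by force
next
  fix x y assume "x \<in> sumset I J" "y \<in> sumset I J"
  then obtain a b a' b' where "x = a + b" "y = a' + b'" "a \<in> I" "b \<in> J" "a' \<in> I" "b' \<in> J"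
    unfolding sumset_def by blast
  moreover have "a + b + (a' + b') = (a + a') + (b + b')" by (simp add: algebra_simps)
  ultimately show "x + y \<in> sumset I J" unfolding sumset_def
    using subspace_add[OF I] subspace_add[OF J] by blast
next
  fix c x assume "x \<in> sumset I J"
  then obtain a b where "x = a + b" "a \<in> I" "b \<in> J" unfolding sumset_def by blast
  moreover have "c *s x = c *s a + c *s b" using \<open>x = a + b\<close> by (simp add: scale_right_distrib)
  moreover have "c *s a \<in> I" "c *s b \<in> J" using \<open>a \<in> I\<close> \<open>b \<in> J\<close> subspace_scale[OF I] subspace_scale[OF J] by auto
  ultimately show "c *s x \<in> sumset I J" unfolding sumset_def by blast
qed

lemma sumset_left: "subspace J \<Longrightarrow> I \<subseteq> sumset I J"
  unfolding sumset_def using subspace_0 by force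

lemma sumset_right: "subspace I \<Longrightarrow> J \<subseteq> sumset I J"
  unfolding sumset_def using subspace_0 by force

lemma sumset_zero: "sumset {0} J = J"
  unfolding sumset_def by auto

end

locale leib = V: fdvs scV + L: fdvs scL
  for scV :: "'k::field_char_0 \<Rightarrow> 'V::ab_group_add \<Rightarrow> 'V"
  and scL :: "'k \<Rightarrow> 'L::ab_group_add \<Rightarrow> 'L" +
  fixes br :: "'L \<Rightarrow> 'L \<Rightarrow> 'L" and l r :: "'L \<Rightarrow> 'V \<Rightarrow> 'V"
  assumes ac: "alg_closed TYPE('k)" and leib: "leibniz_algebra scL br"
    and rep: "leibniz_rep scL br scV l r"
begin

lemma br_lin: "Vector_Spaces.linear scL scL (br x)" "Vector_Spaces.linear scL scL (\<lambda>u. br u y)"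
  using leib unfolding leibniz_algebra_def by auto

lemma leib_id: "br x (br y z) = br (br x y) z - br (br x z) y"
  using leib unfolding leibniz_algebra_def by auto

lemma r_lin: "V.lin (r x)" "Vector_Spaces.linear scL scV (\<lambda>x. r x v)"
  using rep unfolding leibniz_rep_def by auto

lemma r_br: "r (br x y) v = r y (r x v) - r x (r y v)"
  using rep unfolding leibniz_rep_def by auto

lemma br_simps:
  "br x (u + v) = br x u + br x v" "br (u + v) y = br u y + br v y"
  "br x 0 = 0" "br 0 y = 0" "br x (u - v) = br x u - br x v" "br (u - v) y = br u y - br v y"
  "br x (scL c u) = scL c (br x u)" "br (scL c u) y = scL c (br u y)"
  using lin_gen[OF br_lin(1)[of x]] lin_gen[OF br_lin(2)[of y]] by auto

lemma r_simps:
  "r x (v + w) = r x v + r x w" "r x 0 = 0" "r x (v - w) = r x v - r x w"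
  "r x (scV c v) = scV c (r x v)"
  "r (a + b) v = r a v + r b v" "r 0 v = 0" "r (a - b) v = r a v - r b v"
  "r (scL c a) v = scV c (r a v)" "r (sum f A) v = (\<Sum>i\<in>A. r (f i) v)"
  using lin_gen[OF r_lin(1)[of x]] lin_gen[OF r_lin(2)[of v]] by auto

abbreviation brk' where "brk' \<equiv> brk scL br"
abbreviation der where "der \<equiv> derived scL br"
abbreviation tsi where "tsi \<equiv> two_sided_ideal scL br"

lemma brk_mem: "u \<in> X \<Longrightarrow> v \<in> Y \<Longrightarrow> br u v \<in> brk' X Y"
  unfolding brk_def by (rule L.span_base) blast

lemma brk_min: "L.subspace S \<Longrightarrow> (\<And>u v. u \<in> X \<Longrightarrow> v \<in> Y \<Longrightarrow> br u v \<in> S) \<Longrightarrow> brk' X Y \<subseteq> S"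
  unfolding brk_def by (rule L.span_minimal) auto

lemma brk_subspace: "L.subspace (brk' X Y)"
  unfolding brk_def by simp

lemma der_subspace: "L.subspace I \<Longrightarrow> L.subspace (der k I)"
  by (cases k) (auto simp: brk_subspace)

lemma der_mono: "A \<subseteq> B \<Longrightarrow> der k A \<subseteq> der k B"
proof (induction k)
  case (Suc k)
  then show ?case unfolding derived.simps brk_def by (intro L.span_mono) blast
qed simp

lemma der_add: "der (m + k) X = der k (der m X)"
  by (induction k) auto

lemma der_0: "L.subspace I \<Longrightarrow> 0 \<in> der k I"
  using der_subspace L.subspace_0 by blast

lemma der_left:
  assumes I: "L.subspace I" and left: "\<And>x a. a \<in> I \<Longrightarrow> br x a \<in> I"
  shows "a \<in> der k I \<Longrightarrow> br x a \<in> der k I"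
proof (induction k arbitrary: x a)
  case 0 then show ?case using left by simp
next
  case (Suc k)
  let ?D = "der k I"
  have "br x c \<in> brk' ?D ?D" if c: "c \<in> brk' ?D ?D" for c
  proof -
    have sub: "L.subspace {c. br x c \<in> brk' ?D ?D}"
      by (rule preimage_subspace[OF br_lin(1) brk_subspace])
    have "brk' ?D ?D \<subseteq> {c. br x c \<in> brk' ?D ?D}"
    proof (rule brk_min[OF sub])
      fix u v assume u: "u \<in> ?D" and v: "v \<in> ?D"
      have "br x (br u v) = br (br x u) v - br (br x v) u" by (rule leib_id)
      moreover have "br (br x u) v \<in> brk' ?D ?D" using Suc.IH[OF u] v by (rule brk_mem)
      moreover have "br (br x v) u \<in> brk' ?D ?D" using Suc.IH[OF v] u by (rule brk_mem)
      ultimately show "br u v \<in> {c. br x c \<in> brk' ?D ?D}"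
        using L.subspace_diff[OF brk_subspace] by simp
    qed
    then show ?thesis using c by blast
  qed
  then show ?case using Suc.prems by simp
qed

lemma tsi_sum:
  assumes I: "tsi I" and J: "tsi J" shows "tsi (L.sumset I J)"
  unfolding two_sided_ideal_def
proof (intro conjI ballI allI)
  show "L.subspace (L.sumset I J)" using I J unfolding two_sided_ideal_def by (simp add: L.sumset_subspace)
next
  fix s y assume "s \<in> L.sumset I J"
  then obtain a b where s: "s = a + b" "a \<in> I" "b \<in> J" unfolding L.sumset_def by blast
  have "br s y = br a y + br b y" "br y s = br y a + br y b" using s(1) by (auto simp: br_simps)
  moreover have "br a y \<in> I" "br y a \<in> I" "br b y \<in> J" "br y b \<in> J"
    using s I J unfolding two_sided_ideal_def by auto
  ultimately show "br s y \<in> L.sumset I J" "br y s \<in> L.sumset I J" unfolding L.sumset_def by blast+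
qed

lemma der_sumset:
  assumes I: "L.subspace I" and J: "tsi J"
  shows "der k (L.sumset I J) \<subseteq> L.sumset (der k I) J"
proof (induction k)
  case 0 then show ?case by simp
next
  case (Suc k)
  have Jsub: "L.subspace J" and Jid: "\<And>x y. x \<in> J \<Longrightarrow> br x y \<in> J \<and> br y x \<in> J"
    using J unfolding two_sided_ideal_def by auto
  have S: "L.subspace (L.sumset (der (Suc k) I) J)"
    by (rule L.sumset_subspace[OF der_subspace[OF I] Jsub])
  show ?case unfolding derived.simps
  proof (rule brk_min[OF S[unfolded derived.simps]])
    fix u v assume "u \<in> der k (L.sumset I J)" "v \<in> der k (L.sumset I J)"
    then obtain a b a' b' where uv: "u = a + b" "v = a' + b'" "a \<in> der k I" "b \<in> J" "a' \<in> der k I" "b' \<in> J"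
      using Suc.IH unfolding L.sumset_def by blast
    have eq: "br u v = br a a' + (br a b' + br b a' + br b b')" using uv by (simp add: br_simps algebra_simps)
    have "br a b' + br b a' + br b b' \<in> J"
      using uv Jid L.subspace_add[OF Jsub] by simp
    moreover have "br a a' \<in> brk' (der k I) (der k I)" using uv by (intro brk_mem)
    ultimately show "br u v \<in> L.sumset (brk' (der k I) (der k I)) J"
      unfolding eq L.sumset_def by blast
  qed
qed

lemma tsi_zero: "tsi {0}"
  unfolding two_sided_ideal_def by (auto simp: br_simps)

lemma solvable_sum:
  assumes I: "tsi I" "solvable_sub scL br I" and J: "tsi J" "solvable_sub scL br J"
  shows "solvable_sub scL br (L.sumset I J)"
proof -
  obtain m where m: "der m I = {0}" using I(2) unfolding solvable_sub_def by blast
  obtain m' where m': "der m' J = {0}" using J(2) unfolding solvable_sub_def by blast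
  have Isub: "L.subspace I" and Jsub: "L.subspace J" using I J unfolding two_sided_ideal_def by auto
  have "der m (L.sumset I J) \<subseteq> J" using der_sumset[OF Isub J(1), of m] m L.sumset_zero by simp
  then have "der (m + m') (L.sumset I J) \<subseteq> {0}" unfolding der_add using der_mono m' by blast
  moreover have "0 \<in> der (m + m') (L.sumset I J)" by (rule der_0[OF L.sumset_subspace[OF Isub Jsub]])
  ultimately show ?thesis unfolding solvable_sub_def by blast
qed

lemma rad_exists:
  "\<exists>R. tsi R \<and> solvable_sub scL br R \<and> (\<forall>I. tsi I \<and> solvable_sub scL br I \<longrightarrow> I \<subseteq> R)"
proof -
  let ?S = "{I. tsi I \<and> solvable_sub scL br I}"
  have z: "{0} \<in> ?S" using tsi_zero unfolding solvable_sub_def by (auto intro: exI[of _ 0])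
  have fin: "finite (L.dim ` ?S)" by (rule finite_subset[of _ "{..L.dim (UNIV::'L set)}"]) (auto intro: L.dim_bound)
  have ne: "L.dim ` ?S \<noteq> {}" using z by blast
  obtain R where R: "R \<in> ?S" "L.dim R = Max (L.dim ` ?S)" using Max_in[OF fin ne] by auto
  have "I \<subseteq> R" if I: "I \<in> ?S" for I
  proof -
    have Rsub: "L.subspace R" and Isub: "L.subspace I" using R(1) I unfolding two_sided_ideal_def by auto
    have S': "L.sumset I R \<in> ?S" using tsi_sum solvable_sum I R(1) by auto
    have "L.dim (L.sumset I R) \<le> L.dim R" using R(2) Max_ge[OF fin] S' by auto
    moreover have "R \<subseteq> L.sumset I R" by (rule L.sumset_right[OF Isub])
    ultimately have "L.sumset I R = R"
      using L.dim_strict[OF Rsub L.sumset_subspace[OF Isub Rsub]] by fastforce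
    then show ?thesis using L.sumset_left[OF Rsub, of I] by simp
  qed
  then show ?thesis using R(1) by blast
qed

lemma rad_props: "tsi (Rad scL br)" "solvable_sub scL br (Rad scL br)"
proof -
  obtain R where R: "tsi R" "solvable_sub scL br R" "\<forall>I. tsi I \<and> solvable_sub scL br I \<longrightarrow> I \<subseteq> R"
    using rad_exists by blast
  have "Rad scL br = R" unfolding Rad_def
  proof (rule the_equality)
    show "tsi R \<and> solvable_sub scL br R \<and> (\<forall>I. tsi I \<and> solvable_sub scL br I \<longrightarrow> I \<subseteq> R)" using R by blast
  next
    fix R' assume "tsi R' \<and> solvable_sub scL br R' \<and> (\<forall>I. tsi I \<and> solvable_sub scL br I \<longrightarrow> I \<subseteq> R')"
    then show "R' = R" using R by blast
  qed
  then show "tsi (Rad scL br)" "solvable_sub scL br (Rad scL br)" using R by auto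
qed

end


context fdvs begin

lemma weight_subspace:
  assumes X: "subspace X" and Y: "subspace Y" and A: "\<And>a. a \<in> I \<Longrightarrow> lin (A a)"
  shows "subspace {w\<in>X. \<forall>a\<in>I. A a w - c a *s w \<in> Y}"
proof (rule subspaceI)
  show "0 \<in> {w\<in>X. \<forall>a\<in>I. A a w - c a *s w \<in> Y}"
    using subspace_0[OF X] subspace_0[OF Y] A by (auto simp: lin_zero)
next
  fix x y assume "x \<in> {w\<in>X. \<forall>a\<in>I. A a w - c a *s w \<in> Y}" "y \<in> {w\<in>X. \<forall>a\<in>I. A a w - c a *s w \<in> Y}"
  then have xy: "x \<in> X" "y \<in> X" and hx: "\<forall>a\<in>I. A a x - c a *s x \<in> Y"
    and hy: "\<forall>a\<in>I. A a y - c a *s y \<in> Y" by auto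
  have "x + y \<in> X" using xy by (rule subspace_add[OF X])
  moreover have "A a (x + y) - c a *s (x + y) \<in> Y" if a: "a \<in> I" for a
  proof -
    have eq: "A a (x + y) - c a *s (x + y) = (A a x - c a *s x) + (A a y - c a *s y)"
      using A[OF a] by (simp add: lin_add scale_right_distrib)
    show ?thesis unfolding eq using hx hy a by (intro subspace_add[OF Y]) auto
  qed
  ultimately show "x + y \<in> {w\<in>X. \<forall>a\<in>I. A a w - c a *s w \<in> Y}" by blast
next
  fix b x assume "x \<in> {w\<in>X. \<forall>a\<in>I. A a w - c a *s w \<in> Y}"
  then have xX: "x \<in> X" and hx: "\<forall>a\<in>I. A a x - c a *s x \<in> Y" by auto
  have "b *s x \<in> X" using xX by (rule subspace_scale[OF X])
  moreover have "A a (b *s x) - c a *s (b *s x) \<in> Y" if a: "a \<in> I" for a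
  proof -
    have eq: "A a (b *s x) - c a *s (b *s x) = b *s (A a x - c a *s x)"
      using A[OF a] by (simp add: lin_scale scale_right_diff_distrib mult.commute)
    show ?thesis unfolding eq using hx a by (intro subspace_scale[OF Y]) auto
  qed
  ultimately show "b *s x \<in> {w\<in>X. \<forall>a\<in>I. A a w - c a *s w \<in> Y}" by blast
qed

end

context leib begin

definition rinv :: "'V set \<Rightarrow> bool" where
  "rinv S \<longleftrightarrow> V.subspace S \<and> (\<forall>x. \<forall>v\<in>S. r x v \<in> S)"

lemma inv_sub: "rinv S \<Longrightarrow> V.subspace S" and inv_r: "rinv S \<Longrightarrow> v \<in> S \<Longrightarrow> r x v \<in> S"
  by (simp_all add: rinv_def)

lemma invariance:
  assumes Y: "rinv Y" and X: "rinv X" and YX: "Y \<subseteq> X"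
    and I: "\<And>x a. a \<in> I \<Longrightarrow> br x a \<in> I"
    and w: "w \<in> X" "\<forall>a\<in>I. r a w - scV (wt a) w \<in> Y"
  shows "\<forall>a\<in>I. r a (r x w) - scV (wt a) (r x w) \<in> Y"
proof (cases "w \<in> Y")
  case True
  then show ?thesis using inv_r[OF Y] V.subspace_diff[OF inv_sub[OF Y]] V.subspace_scale[OF inv_sub[OF Y]] by blast
next
  case False
  have Ys: "V.subspace Y" by (rule inv_sub[OF Y])
  define z where "z i = (r x ^^ i) w" for i
  have zS: "z (Suc i) = r x (z i)" for i unfolding z_def by simp
  have z0: "z 0 = w" unfolding z_def by simp
  obtain n where n: "n \<ge> 1" "V.indep_mod Y n z" "z n \<in> V.modspan Y n z"
    using V.krylov[OF Ys False, of "r x"] unfolding z_def by blast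
  have rY: "r b ` Y \<subseteq> Y" for b using inv_r[OF Y] by blast
  have Tz: "r x (z j) \<in> V.modspan Y n z" if j: "j < n" for j
  proof (cases "Suc j < n")
    case True then show ?thesis unfolding zS[symmetric] by (rule V.ms_z[OF Ys])
  next
    case False then have "Suc j = n" using j by simp
    then show ?thesis using n(3) zS[of j] by simp
  qed
  have shift: "r x v \<in> V.modspan Y (Suc j) z" if v: "v \<in> V.modspan Y j z" for v j
  proof -
    have S: "V.subspace {v. r x v \<in> V.modspan Y (Suc j) z}"
      by (rule preimage_subspace[OF r_lin(1) V.ms_subspace[OF Ys]])
    have "V.modspan Y j z \<subseteq> {v. r x v \<in> V.modspan Y (Suc j) z}"
    proof (rule V.ms_closed[OF Ys S])
      show "Y \<subseteq> {v. r x v \<in> V.modspan Y (Suc j) z}" using inv_r[OF Y] V.ms_Y[OF Ys] by blast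
      show "\<forall>i<j. z i \<in> {v. r x v \<in> V.modspan Y (Suc j) z}"
        using V.ms_z[OF Ys, of "Suc _" "Suc j" z] by (auto simp: zS[symmetric])
    qed
    then show ?thesis using v by blast
  qed
  have step: "r a (r x u) - scV (wt a) (r x u)
      = r x (r a u - scV (wt a) u) + (r (br x a) u - scV (wt (br x a)) u) + scV (wt (br x a)) u" for a u
    using r_br[of x a u] by (simp add: r_simps)
  have C1: "\<forall>a\<in>I. r a (z j) - scV (wt a) (z j) \<in> V.modspan Y j z" for j
  proof (induction j)
    case 0 then show ?case using w z0 V.ms0[OF Ys] by simp
  next
    case (Suc j)
    show ?case
    proof
      fix a assume a: "a \<in> I"
      have h1: "r x (r a (z j) - scV (wt a) (z j)) \<in> V.modspan Y (Suc j) z"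
        using Suc a by (intro shift) auto
      have h2: "r (br x a) (z j) - scV (wt (br x a)) (z j) \<in> V.modspan Y (Suc j) z"
        using Suc I[OF a] V.ms_mono[OF Ys, of j "Suc j" z] by auto
      have h3: "scV (wt (br x a)) (z j) \<in> V.modspan Y (Suc j) z"
        by (intro V.subspace_scale[OF V.ms_subspace[OF Ys]] V.ms_z[OF Ys]) simp
      show "r a (z (Suc j)) - scV (wt a) (z (Suc j)) \<in> V.modspan Y (Suc j) z"
        unfolding zS step
        by (rule V.subspace_add[OF V.ms_subspace[OF Ys] V.subspace_add[OF V.ms_subspace[OF Ys] h1 h2] h3])
    qed
  qed
  have lam0: "wt (br x a) = 0" if a: "a \<in> I" for a
  proof (rule V.trace_zero[OF Ys n(2) n(1) r_lin(1) rY _ r_lin(1) rY])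
    show "\<forall>j<n. r a (z j) \<in> V.modspan Y n z"
    proof (intro allI impI)
      fix j assume j: "j < n"
      have "r a (z j) - scV (wt a) (z j) \<in> V.modspan Y n z"
        using C1[of j] a V.ms_mono[OF Ys, of j n z] j by auto
      moreover have "scV (wt a) (z j) \<in> V.modspan Y n z"
        using j by (intro V.subspace_scale[OF V.ms_subspace[OF Ys]] V.ms_z[OF Ys])
      ultimately show "r a (z j) \<in> V.modspan Y n z"
        using V.subspace_add[OF V.ms_subspace[OF Ys]] by fastforce
    qed
    show "\<forall>j<n. r x (z j) \<in> V.modspan Y n z" using Tz by blast
    show "\<forall>j<n. r a (r x (z j)) - r x (r a (z j)) - scV (wt (br x a)) (z j) \<in> V.modspan Y j z"
    proof (intro allI impI)
      fix j assume "j < n"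
      have "r (br x a) (z j) - scV (wt (br x a)) (z j) \<in> V.modspan Y j z" using C1[of j] I[OF a] by blast
      then show "r a (r x (z j)) - r x (r a (z j)) - scV (wt (br x a)) (z j) \<in> V.modspan Y j z"
        by (simp only: r_br)
    qed
  qed
  have C2: "\<forall>a\<in>I. r a (z j) - scV (wt a) (z j) \<in> Y" for j
  proof (induction j)
    case 0 then show ?case using w z0 by simp
  next
    case (Suc j)
    show ?case
    proof
      fix a assume a: "a \<in> I"
      have h1: "r x (r a (z j) - scV (wt a) (z j)) \<in> Y" using Suc a inv_r[OF Y] by blast
      have h2: "r (br x a) (z j) - scV (wt (br x a)) (z j) \<in> Y" using Suc I[OF a] by blast
      have eq: "r a (z (Suc j)) - scV (wt a) (z (Suc j))
          = r x (r a (z j) - scV (wt a) (z j)) + (r (br x a) (z j) - scV (wt (br x a)) (z j))"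
        unfolding zS step lam0[OF a] by simp
      show "r a (z (Suc j)) - scV (wt a) (z (Suc j)) \<in> Y"
        unfolding eq by (rule V.subspace_add[OF Ys h1 h2])
    qed
  qed
  show ?thesis using C2[of 1] zS[of 0] z0 by simp
qed

end


context leib begin

abbreviation RR where "RR \<equiv> Rad scL br"

lemma R_sub: "L.subspace RR" and R_id: "a \<in> RR \<Longrightarrow> br a x \<in> RR \<and> br x a \<in> RR"
  using rad_props(1) unfolding two_sided_ideal_def by auto

lemma R_solv: "\<exists>m. der m RR = {0}"
  using rad_props(2) unfolding solvable_sub_def by blast

definition irr where
  "irr Y X \<longleftrightarrow> rinv Y \<and> rinv X \<and> Y \<subseteq> X \<and> Y \<noteq> X \<and> (\<forall>Z. rinv Z \<and> Y \<subseteq> Z \<and> Z \<subseteq> X \<longrightarrow> Z = Y \<or> Z = X)"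

definition scal where
  "scal Y X k \<longleftrightarrow> (\<forall>a\<in>der k RR. \<exists>c. \<forall>w\<in>X. r a w - scV c w \<in> Y)"

lemma der_left_R: "a \<in> der k RR \<Longrightarrow> br x a \<in> der k RR"
  using der_left[OF R_sub] R_id by blast

lemma scal_step:
  assumes irr: "irr Y X" and P: "scal Y X (Suc k)"
  shows "scal Y X k"
proof -
  have Y: "rinv Y" and X: "rinv X" and YX: "Y \<subseteq> X" "Y \<noteq> X"
    and irrZ: "\<And>Z. rinv Z \<Longrightarrow> Y \<subseteq> Z \<Longrightarrow> Z \<subseteq> X \<Longrightarrow> Z = Y \<or> Z = X"
    using irr unfolding irr_def by auto
  have Ys: "V.subspace Y" and Xs: "V.subspace X" using Y X by (auto intro: inv_sub)
  let ?I = "der k RR"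
  have rY: "r b ` Y \<subseteq> Y" for b using inv_r[OF Y] by blast
  have rX: "r b ` X \<subseteq> X" for b using inv_r[OF X] by blast
  obtain n zs where zs: "\<forall>i<n. zs i \<in> X" "V.indep_mod Y n zs" "V.modspan Y n zs = X"
    using V.qbasis_exists[OF Ys Xs YX(1)] by blast
  have n: "n \<ge> 1"
  proof (rule ccontr)
    assume "\<not> n \<ge> 1" then have "n = 0" by simp
    then show False using zs(3) V.ms0[OF Ys] YX(2) by simp
  qed
  have comm: "r (br a b) w \<in> Y" if a: "a \<in> ?I" and b: "b \<in> ?I" and w: "w \<in> X" for a b w
  proof -
    have "br a b \<in> der (Suc k) RR" using a b by (simp add: brk_mem)
    then obtain \<mu> where mu: "\<forall>w\<in>X. r (br a b) w - scV \<mu> w \<in> Y" using P unfolding scal_def by blast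
    have "\<mu> = 0"
    proof (rule V.trace_zero[OF Ys zs(2) n r_lin(1) rY _ r_lin(1) rY])
      show "\<forall>j<n. r b (zs j) \<in> V.modspan Y n zs" "\<forall>j<n. r a (zs j) \<in> V.modspan Y n zs"
        using zs(1,3) inv_r[OF X] by auto
      show "\<forall>j<n. r b (r a (zs j)) - r a (r b (zs j)) - scV \<mu> (zs j) \<in> V.modspan Y j zs"
      proof (intro allI impI)
        fix j assume "j < n"
        then have "r (br a b) (zs j) - scV \<mu> (zs j) \<in> Y" using mu zs(1) by blast
        then have "r (br a b) (zs j) - scV \<mu> (zs j) \<in> V.modspan Y j zs" using V.ms_Y[OF Ys] by blast
        then show "r b (r a (zs j)) - r a (r b (zs j)) - scV \<mu> (zs j) \<in> V.modspan Y j zs"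
          by (simp only: r_br)
      qed
    qed
    then show ?thesis using mu w by simp
  qed
  have Isub: "L.subspace ?I" by (rule der_subspace[OF R_sub])
  obtain p as where as: "\<forall>i<p. as i \<in> ?I" "L.indep_mod {0} p as" "L.modspan {0} p as = ?I"
    using L.qbasis_exists[OF L.subspace_single_0 Isub] der_0[OF R_sub] by blast
  obtain v c where v: "v \<in> X" "v \<notin> Y" "\<forall>i<p. r (as i) v - scV (c i) v \<in> Y"
  proof -
    have "\<exists>v\<in>X. v \<notin> Y \<and> (\<exists>c. \<forall>i<p. r (as i) v - scV (c i) v \<in> Y)"
    proof (rule V.common_eigen[OF ac Ys Xs YX])
      show "\<forall>i<p. V.lin (r (as i)) \<and> r (as i) ` Y \<subseteq> Y \<and> r (as i) ` X \<subseteq> X" using r_lin(1) rY rX by blast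
      show "\<forall>i<p. \<forall>j<p. \<forall>w\<in>X. r (as i) (r (as j) w) - r (as j) (r (as i) w) \<in> Y"
        using comm as(1) by (auto simp: r_br[symmetric])
    qed
    then show ?thesis using that by blast
  qed
  have ex: "\<exists>c. r a v - scV c v \<in> Y" if a: "a \<in> ?I" for a
  proof -
    obtain t where t: "a - (\<Sum>i<p. scL (t i) (as i)) \<in> {0}" using a as(3) unfolding L.modspan_def by blast
    then have aeq: "a = (\<Sum>i<p. scL (t i) (as i))" by simp
    have "r a v - scV (\<Sum>i<p. t i * c i) v = (\<Sum>i<p. scV (t i) (r (as i) v - scV (c i) v))"
      unfolding aeq by (simp add: r_simps V.scale_sum_left V.scale_right_diff_distrib sum_subtractf)
    also have "\<dots> \<in> Y" using v(3) by (intro V.subspace_sum[OF Ys] V.subspace_scale[OF Ys]) auto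
    finally show ?thesis by blast
  qed
  define wt where "wt a = (SOME c. r a v - scV c v \<in> Y)" for a
  have wt: "r a v - scV (wt a) v \<in> Y" if "a \<in> ?I" for a
    unfolding wt_def using someI_ex[OF ex[OF that]] .
  define W where "W = {w\<in>X. \<forall>a\<in>?I. r a w - scV (wt a) w \<in> Y}"
  have Wsub: "V.subspace W" unfolding W_def by (rule V.weight_subspace[OF Xs Ys r_lin(1)])
  have Winv: "rinv W" unfolding rinv_def
  proof (intro conjI allI ballI Wsub)
    fix x w assume w: "w \<in> W"
    have "\<forall>a\<in>?I. r a (r x w) - scV (wt a) (r x w) \<in> Y"
      using w unfolding W_def by (intro invariance[OF Y X YX(1) der_left_R]) auto
    moreover have "r x w \<in> X" using w inv_r[OF X] unfolding W_def by blast
    ultimately show "r x w \<in> W" unfolding W_def by blast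
  qed
  have YW: "Y \<subseteq> W" unfolding W_def
    using YX(1) inv_r[OF Y] V.subspace_diff[OF Ys] V.subspace_scale[OF Ys] by blast
  have WX: "W \<subseteq> X" unfolding W_def by blast
  have "v \<in> W" unfolding W_def using v(1) wt by blast
  then have "W = X" using irrZ[OF Winv YW WX] v(2) by blast
  then show ?thesis unfolding scal_def W_def by blast
qed

lemma scal_R:
  assumes irr: "irr Y X" shows "scal Y X 0"
proof -
  obtain m where m: "der m RR = {0}" using R_solv by blast
  have Ys: "V.subspace Y" using irr unfolding irr_def by (auto intro: inv_sub)
  have Pm: "scal Y X m" unfolding scal_def m using V.subspace_0[OF Ys] by (auto simp: r_simps intro!: exI[of _ 0])
  have "i \<le> m \<Longrightarrow> scal Y X (m - i)" for i
  proof (induction i)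
    case 0 then show ?case using Pm by simp
  next
    case (Suc i)
    then have "scal Y X (Suc (m - Suc i))" by (simp add: Suc_diff_Suc)
    then show ?case by (rule scal_step[OF irr])
  qed
  from this[of m] show ?thesis by simp
qed

lemma key:
  assumes irr: "irr Y X" and c: "c \<in> rad_L scL br" and w: "w \<in> X"
  shows "r c w \<in> Y"
proof -
  have Y: "rinv Y" and X: "rinv X" using irr unfolding irr_def by auto
  have Ys: "V.subspace Y" using Y by (rule inv_sub)
  have sc: "\<forall>a\<in>RR. \<exists>c. \<forall>w\<in>X. r a w - scV c w \<in> Y" using scal_R[OF irr] unfolding scal_def by simp
  let ?G = "{c. \<forall>w\<in>X. r c w \<in> Y}"
  have Gsub: "L.subspace ?G"
  proof -
    have "L.subspace (\<Inter>w\<in>X. {c. r c w \<in> Y})"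
      by (intro L.subspace_Int preimage_subspace[OF r_lin(2) Ys])
    moreover have "(\<Inter>w\<in>X. {c. r c w \<in> Y}) = ?G" by blast
    ultimately show ?thesis by simp
  qed
  have A: "brk' RR UNIV \<subseteq> ?G"
  proof (rule brk_min[OF Gsub])
    fix u x assume u: "u \<in> RR"
    obtain c where c: "\<forall>w\<in>X. r u w - scV c w \<in> Y" using sc u by blast
    show "br u x \<in> ?G"
    proof
      show "\<forall>w\<in>X. r (br u x) w \<in> Y"
      proof
        fix w assume w: "w \<in> X"
        have xw: "r x w \<in> X" using inv_r[OF X w] .
        have eq: "r (br u x) w = r x (r u w - scV c w) - (r u (r x w) - scV c (r x w))"
          by (simp add: r_br r_simps)
        show "r (br u x) w \<in> Y" unfolding eq
          by (rule V.subspace_diff[OF Ys]) (use c w xw inv_r[OF Y] in auto)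
      qed
    qed
  qed
  have B: "brk' UNIV RR \<subseteq> ?G"
  proof (rule brk_min[OF Gsub])
    fix x u assume u: "u \<in> RR"
    obtain c where c: "\<forall>w\<in>X. r u w - scV c w \<in> Y" using sc u by blast
    show "br x u \<in> ?G"
    proof
      show "\<forall>w\<in>X. r (br x u) w \<in> Y"
      proof
        fix w assume w: "w \<in> X"
        have xw: "r x w \<in> X" using inv_r[OF X w] .
        have eq: "r (br x u) w = (r u (r x w) - scV c (r x w)) - r x (r u w - scV c w)"
          by (simp add: r_br r_simps)
        show "r (br x u) w \<in> Y" unfolding eq
          by (rule V.subspace_diff[OF Ys]) (use c w xw inv_r[OF Y] in auto)
      qed
    qed
  qed
  obtain a b where ab: "c = a + b" "a \<in> brk' RR UNIV" "b \<in> brk' UNIV RR" using c unfolding rad_L_def by blast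
  have "r a w \<in> Y" "r b w \<in> Y" using A B ab w by auto
  then show ?thesis unfolding ab r_simps by (rule V.subspace_add[OF Ys])
qed

end


context leib begin

abbreviation JJ where "JJ \<equiv> rad_L scL br"

lemma J_R: assumes c: "c \<in> JJ" shows "c \<in> RR"
proof -
  have A: "brk' RR UNIV \<subseteq> RR" by (rule brk_min[OF R_sub]) (use R_id in blast)
  have B: "brk' UNIV RR \<subseteq> RR" by (rule brk_min[OF R_sub]) (use R_id in blast)
  obtain a b where ab: "c = a + b" "a \<in> brk' RR UNIV" "b \<in> brk' UNIV RR" using c unfolding rad_L_def by blast
  then show ?thesis using A B L.subspace_add[OF R_sub] by auto
qed

lemma J_br: assumes c: "c \<in> JJ" shows "br c x \<in> JJ"
proof -
  have "br c x \<in> brk' RR UNIV" using J_R[OF c] by (intro brk_mem) auto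
  moreover have "0 \<in> brk' UNIV RR" unfolding brk_def by (rule L.span_zero)
  ultimately have "br c x + 0 \<in> JJ" unfolding rad_L_def by blast
  then show ?thesis by simp
qed

primrec chain :: "nat \<Rightarrow> 'V set" where
  "chain 0 = UNIV"
| "chain (Suc i) = V.span {r c v | c v. c \<in> JJ \<and> v \<in> chain i}"

lemma chain_inv: "rinv (chain i)"
proof (induction i)
  case 0 then show ?case unfolding rinv_def by simp
next
  case (Suc i)
  let ?G = "{r c v | c v. c \<in> JJ \<and> v \<in> chain i}"
  have "r x u \<in> V.span ?G" if u: "u \<in> V.span ?G" for x u
  proof -
    have S: "V.subspace {u. r x u \<in> V.span ?G}" by (rule preimage_subspace[OF r_lin(1) V.subspace_span])
    have "?G \<subseteq> {u. r x u \<in> V.span ?G}"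
    proof
      fix g assume "g \<in> ?G"
      then obtain c v where g: "g = r c v" "c \<in> JJ" "v \<in> chain i" by blast
      have eq: "r x (r c v) = r c (r x v) + r (br c x) v" by (simp add: r_br)
      have "r c (r x v) \<in> ?G" using g inv_r[OF Suc.IH] by blast
      moreover have "r (br c x) v \<in> ?G" using g J_br by blast
      ultimately have "r x (r c v) \<in> V.span ?G" unfolding eq
        by (intro V.span_add V.span_base)
      then show "g \<in> {u. r x u \<in> V.span ?G}" using g by simp
    qed
    then have "V.span ?G \<subseteq> {u. r x u \<in> V.span ?G}" by (rule V.span_minimal[OF _ S])
    then show ?thesis using u by blast
  qed
  then show ?case unfolding rinv_def by simp
qed

lemma chain_dec: "chain (Suc i) \<subseteq> chain i"
  unfolding chain.simps
  by (rule V.span_minimal) (auto intro: inv_r[OF chain_inv] inv_sub[OF chain_inv])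

lemma rinv_zero: "rinv {0}" unfolding rinv_def by (simp add: r_simps)

lemma chain_strict:
  assumes nz: "chain i \<noteq> {0}" shows "chain (Suc i) \<noteq> chain i"
proof -
  let ?X = "chain i"
  have X: "rinv ?X" by (rule chain_inv)
  let ?S = "{Y. rinv Y \<and> Y \<subseteq> ?X \<and> Y \<noteq> ?X}"
  have "{0} \<subseteq> ?X" using V.subspace_0[OF inv_sub[OF X]] by simp
  then have z: "{0} \<in> ?S" using rinv_zero nz by simp
  have fin: "finite (V.dim ` ?S)" by (rule finite_subset[of _ "{..V.dim (UNIV::'V set)}"]) (auto intro: V.dim_bound)
  have ne: "V.dim ` ?S \<noteq> {}" using z by blast
  have "Max (V.dim ` ?S) \<in> V.dim ` ?S" by (rule Max_in[OF fin ne])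
  then obtain Y where Y2: "Max (V.dim ` ?S) = V.dim Y" and Y1: "Y \<in> ?S" by (rule imageE)
  have Y: "Y \<in> ?S" "V.dim Y = Max (V.dim ` ?S)" using Y1 Y2 by auto
  have irr: "irr Y ?X" unfolding irr_def
  proof (intro conjI allI impI)
    show "rinv Y" "Y \<subseteq> ?X" "Y \<noteq> ?X" using Y(1) by auto
    show "rinv ?X" by (rule X)
    fix Z assume Z: "rinv Z \<and> Y \<subseteq> Z \<and> Z \<subseteq> ?X"
    show "Z = Y \<or> Z = ?X"
    proof (rule ccontr)
      assume ne: "\<not> (Z = Y \<or> Z = ?X)"
      have Zi: "rinv Z" and YZ: "Y \<subseteq> Z" and ZX: "Z \<subseteq> ?X" using Z by auto
      have Yi: "rinv Y" using Y(1) by simp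
      have "Z \<in> ?S" using Zi ZX ne by simp
      then have "V.dim Z \<le> V.dim Y" using Y(2) Max_ge[OF fin] by auto
      moreover have "V.dim Y < V.dim Z"
        by (rule V.dim_strict[OF inv_sub[OF Yi] inv_sub[OF Zi] YZ]) (use ne in blast)
      ultimately show False by simp
    qed
  qed
  have Ys: "V.subspace Y" using Y(1) inv_sub by blast
  have "chain (Suc i) \<subseteq> Y" unfolding chain.simps
    by (rule V.span_minimal[OF _ Ys]) (auto intro: key[OF irr])
  then show ?thesis using Y(1) by blast
qed

lemma chain_zero_or: "chain i = {0} \<or> V.dim (chain i) + i \<le> V.dim (UNIV::'V set)"
proof (induction i)
  case 0 then show ?case by simp
next
  case (Suc i)
  show ?case
  proof (cases "chain (Suc i) = {0}")
    case True then show ?thesis by simp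
  next
    case False
    have ci: "chain i \<noteq> {0}"
    proof
      assume "chain i = {0}"
      then have "chain (Suc i) \<subseteq> {0}" using chain_dec by blast
      then show False using False V.subspace_0[OF inv_sub[OF chain_inv]] by blast
    qed
    have "V.dim (chain (Suc i)) < V.dim (chain i)"
      using V.dim_strict[OF inv_sub[OF chain_inv] inv_sub[OF chain_inv] chain_dec chain_strict[OF ci]] .
    then show ?thesis using Suc ci by simp
  qed
qed

lemma foldr_chain: "set bs \<subseteq> JJ \<Longrightarrow> foldr r bs v \<in> chain (length bs)"
proof (induction bs)
  case Nil then show ?case by simp
next
  case (Cons b bs)
  then show ?case by (auto intro!: V.span_base)
qed

lemma final: "\<exists>m::nat. m \<ge> 1 \<and> (\<forall>bs. length bs = m \<and> set bs \<subseteq> JJ \<longrightarrow> (\<forall>v. foldr r bs v = 0))"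
proof -
  let ?m = "Suc (V.dim (UNIV::'V set))"
  have "chain ?m = {0}" using chain_zero_or[of ?m] by auto
  then show ?thesis using foldr_chain by (intro exI[of _ ?m]) fastforce
qed

end

theorem proposition4p2:
  fixes scL :: "'k::field_char_0 \<Rightarrow> 'L::ab_group_add \<Rightarrow> 'L"
    and br :: "'L \<Rightarrow> 'L \<Rightarrow> 'L"
    and scV :: "'k \<Rightarrow> 'V::ab_group_add \<Rightarrow> 'V"
    and l r :: "'L \<Rightarrow> 'V \<Rightarrow> 'V"
  assumes "alg_closed TYPE('k)"
    and "fin_dim_vs scL" and "fin_dim_vs scV"
    and "leibniz_algebra scL br"
    and "leibniz_rep scL br scV l r"
  shows "\<exists>m::nat. m \<ge> 1 \<and>
           (\<forall>bs. length bs = m \<and> set bs \<subseteq> rad_L scL br \<longrightarrow> (\<forall>v. foldr r bs v = 0))"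
proof -
  have "leib scV scL br l r"
    using assms unfolding leib_def leib_axioms_def fdvs_def fdvs_axioms_def fin_dim_vs_def by auto
  then interpret leib scV scL br l r .
  show ?thesis by (rule final)
qed


end
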